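(* Let $N\ge2$, $b_1,\dots,b_N\in\{0,1\}$ with $b_N=1$ and $\sum_j b_j2^{N-j}>1$, and let $\rho$ be the largest real root of $x^N-\sum_{j=1}^N b_jx^{N-j}$ (so $1<\rho<2$). Let $Z[\rho]$ denote the set of numbers $\sum_{k=0}^n z_k\rho^k$ with $n\ge0$ and $z_k\in\{0,1\}$. Then $2\notin Z[\rho]$. *)

theory Defs
  imports Complex_Main
begin

definition Zset :: "real \<Rightarrow> real set" where
  "Zset \<rho> = {(\<Sum>k\<le>n. real (z k) * \<rho> ^ k) | n z. \<forall>k\<le>n. z k \<in> {0, 1}}"

definition charpoly :: "nat \<Rightarrow> (nat \<Rightarrow> nat) \<Rightarrow> real \<Rightarrow> real" where
  "charpoly N b x = x ^ N - (\<Sum>j=1..N. real (b j) * x ^ (N - j))"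

end

theory Submission
  imports Defs "HOL-Computational_Algebra.Computational_Algebra"
begin


lemma rho_gt1:
  fixes N :: nat and b :: "nat \<Rightarrow> nat" and \<rho> :: real
  assumes N2: "N \<ge> 2"
    and bb: "\<forall>j\<in>{1..N}. b j \<in> {0, 1}"
    and bN: "b N = 1"
    and s: "(\<Sum>j=1..N. b j * 2 ^ (N - j)) > 1"
    and big: "\<forall>x. charpoly N b x = 0 \<longrightarrow> x \<le> \<rho>"
  shows "\<rho> > 1"
proof -
  have "\<exists>j0\<in>{1..N}. j0 \<noteq> N \<and> b j0 = 1"
  proof (rule ccontr)
    assume nn: "\<not> ?thesis"
    have z: "b j = 0" if "j \<in> {1..N}" "j \<noteq> N" for j
    proof -
      have "b j \<in> {0,1}" using bb that(1) by blast
      hence "b j = 0 \<or> b j = 1" by auto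
      thus ?thesis using nn that by auto
    qed
    have "(\<Sum>j=1..N. b j * 2 ^ (N - j)) = (\<Sum>j=1..N. if j = N then 1 else 0)"
      by (rule sum.cong) (auto simp: z bN)
    also have "\<dots> = 1" using N2 by simp
    finally show False using s by simp
  qed
  then obtain j0 where j0: "j0 \<in> {1..N}" "j0 \<noteq> N" "b j0 = 1" by blast
  have "(\<Sum>j\<in>{j0,N}. b j) \<le> (\<Sum>j=1..N. b j)"
    by (rule sum_mono2) (use j0 N2 in auto)
  hence sb: "(\<Sum>j=1..N. b j) \<ge> 2" using j0 bN by simp
  have c1: "charpoly N b 1 < 0"
  proof -
    have "charpoly N b 1 = 1 - real (\<Sum>j=1..N. b j)" by (simp add: charpoly_def)
    thus ?thesis using sb by linarith
  qed
  define M :: real where "M = real N + 1"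
  have M1: "M \<ge> 1" by (simp add: M_def)
  have "(\<Sum>j=1..N. real (b j) * M ^ (N - j)) \<le> (\<Sum>j=1..N. M ^ (N - 1))"
  proof (rule sum_mono)
    fix j assume j: "j \<in> {1..N}"
    have "b j \<in> {0,1}" using bb j by blast
    hence "real (b j) \<le> 1" by auto
    moreover have "M ^ (N - j) \<le> M ^ (N - 1)" using j M1 by (intro power_increasing) auto
    ultimately show "real (b j) * M ^ (N - j) \<le> M ^ (N - 1)"
      by (metis M1 mult_le_one mult_mono mult_1 of_nat_0_le_iff order_trans zero_le_one zero_le_power le_numeral_extra(1))
  qed
  also have "\<dots> = real N * M ^ (N - 1)" by simp
  also have "\<dots> < M * M ^ (N - 1)" using M1 by (simp add: M_def)
  also have "\<dots> = M ^ N" using N2 by (cases N) auto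
  finally have cM: "charpoly N b M > 0" by (simp add: charpoly_def)
  have cont: "\<forall>x. 1 \<le> x \<and> x \<le> M \<longrightarrow> isCont (charpoly N b) x"
    unfolding charpoly_def by (auto intro!: continuous_intros)
  obtain x where x: "1 \<le> x" "x \<le> M" "charpoly N b x = 0"
    using IVT[of "charpoly N b" 1 0 M] c1 cM M1 cont by auto
  have "x \<noteq> 1" using x c1 by auto
  hence "x > 1" using x by auto
  moreover have "x \<le> \<rho>" using big x by auto
  ultimately show ?thesis by simp
qed



lemma map_poly_of_int_mult:
  "map_poly (of_int :: int \<Rightarrow> 'a::comm_ring_1) (p * q) = map_poly of_int p * map_poly of_int q"
  by (rule poly_eqI) (simp add: coeff_map_poly coeff_mult)

lemma map_poly_of_int_add:
  "map_poly (of_int :: int \<Rightarrow> 'a::comm_ring_1) (p + q) = map_poly of_int p + map_poly of_int q"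
  by (rule poly_eqI) (simp add: coeff_map_poly)

lemma map_poly_of_int_diff:
  "map_poly (of_int :: int \<Rightarrow> 'a::comm_ring_1) (p - q) = map_poly of_int p - map_poly of_int q"
  by (rule poly_eqI) (simp add: coeff_map_poly)

lemma map_poly_of_int_smult:
  "map_poly (of_int :: int \<Rightarrow> 'a::comm_ring_1) (smult a q) = smult (of_int a) (map_poly of_int q)"
  by (rule poly_eqI) (simp add: coeff_map_poly)

lemma map_poly_of_int_sum:
  "map_poly (of_int :: int \<Rightarrow> 'a::comm_ring_1) (sum f A) = (\<Sum>x\<in>A. map_poly of_int (f x))"
  by (rule poly_eqI) (simp add: coeff_map_poly coeff_sum)

lemma map_poly_of_int_monom:
  "map_poly (of_int :: int \<Rightarrow> 'a::comm_ring_1) (monom c n) = monom (of_int c) n"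
  by (simp add: map_poly_monom)

lemma root_prod_bound:
  fixes F :: "complex poly"
  assumes "F \<noteq> 0" "r \<ge> 0" "\<And>a. poly F a = 0 \<Longrightarrow> r \<le> norm a"
  shows "norm (coeff F 0) \<ge> norm (lead_coeff F) * r ^ degree F"
  using assms
proof (induction "degree F" arbitrary: F)
  case 0
  hence "degree F = 0" by simp
  thus ?case by simp
next
  case (Suc d)
  then have "\<not> constant (poly F)" by (subst constant_degree) simp
  then obtain a where a: "poly F a = 0" using fundamental_theorem_of_algebra by blast
  then obtain G where G: "F = [:-a, 1:] * G" by (metis dvdE poly_eq_0_iff_dvd)
  have G0: "G \<noteq> 0" using Suc.prems G by auto
  have e: "degree ([:-a, 1:] * G) = 1 + degree G" using G0 by (subst degree_mult_eq) auto
  have "Suc d = 1 + degree G" using Suc.hyps(2) G e by metis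
  hence dG: "degree G = d" by simp
  have IH: "norm (coeff G 0) \<ge> norm (lead_coeff G) * r ^ degree G"
    apply (rule Suc.hyps(1)[OF dG[symmetric] G0 Suc.prems(2)])
    using Suc.prems(3) G by auto
  have ra: "r \<le> norm a" using Suc.prems(3) a by blast
  have c0: "coeff F 0 = - a * coeff G 0" using G by (simp add: coeff_mult_0)
  have "lead_coeff ([:-a, 1:] * G) = lead_coeff G" by (subst lead_coeff_mult) simp
  hence lF: "lead_coeff F = lead_coeff G" using G by (simp only:)
  have dF: "degree F = Suc (degree G)" using Suc.hyps(2) dG by simp
  have "norm (lead_coeff F) * r ^ degree F = r * (norm (lead_coeff G) * r ^ degree G)"
    unfolding lF by (simp add: dF mult_ac)
  also have "\<dots> \<le> norm a * norm (coeff G 0)"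
    by (rule mult_mono) (use ra IH Suc.prems(2) in auto)
  also have "\<dots> = norm (coeff F 0)" by (simp add: c0 norm_mult)
  finally show ?case .
qed



definition E :: "complex \<Rightarrow> int poly \<Rightarrow> complex" where
  "E x p = poly (map_poly of_int p) x"

lemma E_mult: "E x (p * q) = E x p * E x q"
  by (simp add: E_def map_poly_of_int_mult)
lemma E_add: "E x (p + q) = E x p + E x q"
  by (simp add: E_def map_poly_of_int_add)
lemma E_smult: "E x (smult a q) = of_int a * E x q"
  by (simp add: E_def map_poly_of_int_smult)

lemma core:
  fixes f Q :: "int poly" and x :: complex
  assumes pf: "prime f" and fx: "E x f = 0" and Qx: "E x Q = 0"
  shows "\<exists>a. a \<noteq> 0 \<and> f dvd smult a Q"
proof -
  define S where "S = {g. g \<noteq> 0 \<and> E x g = 0}"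
  have fS: "f \<in> S" using pf fx by (auto simp: S_def)
  obtain g where gS: "g \<in> S" and gmin: "\<And>h. h \<in> S \<Longrightarrow> degree g \<le> degree h"
    using ex_has_least_nat[of "\<lambda>g. g \<in> S" f degree] fS by blast
  have g0: "g \<noteq> 0" and gx: "E x g = 0" using gS by (auto simp: S_def)
  have mind: "\<exists>a. a \<noteq> 0 \<and> g dvd smult a h" if hx: "E x h = 0" for h
  proof -
    define r where "r = pseudo_mod h g"
    obtain a q where aq: "a \<noteq> 0" "smult a h = g * q + r"
      using pseudo_mod(1)[OF g0, of h] unfolding r_def by blast
    have rd: "r = 0 \<or> degree r < degree g" using pseudo_mod(2)[OF g0, of h] unfolding r_def by blast
    have "E x (smult a h) = E x (g * q + r)" using aq by simp
    hence "E x r = 0" using hx gx by (simp add: E_smult E_add E_mult)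
    hence "r = 0"
    proof (rule contrapos_pp)
      assume "r \<noteq> 0"
      hence "r \<in> S" using \<open>E x r = 0\<close> by (simp add: S_def)
      hence "degree g \<le> degree r" by (rule gmin)
      thus "E x r \<noteq> 0" using rd \<open>r \<noteq> 0\<close> by simp
    qed
    thus ?thesis using aq by auto
  qed
  obtain c where c: "c \<noteq> 0" "g dvd smult c f" using mind[OF fx] by blast
  then obtain t where t: "smult c f = g * t" by (auto elim: dvdE)
  have "f dvd g * t" using t by (metis dvd_smult dvd_refl)
  hence "f dvd g \<or> f dvd t" using pf by (simp add: prime_dvd_mult_iff)
  moreover have "\<not> f dvd t"
  proof
    assume "f dvd t"
    then obtain u where u: "t = f * u" by (auto elim: dvdE)
    have f0: "f \<noteq> 0" using pf by auto
    have "[:c:] * f = (g * u) * f" using t u by (simp add: mult_ac)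
    hence "[:c:] = g * u" using f0 by (metis mult_cancel_right)
    hence "degree g = 0" using g0 c(1)
      by (metis add_eq_0_iff_both_eq_0 degree_mult_eq degree_pCons_0 mult_zero_right pCons_eq_0_iff)
    then obtain k where "g = [:k:]" by (metis degree_eq_zeroE)
    thus False using g0 gx by (simp add: E_def map_poly_pCons)
  qed
  ultimately have "f dvd g" by blast
  obtain a where a: "a \<noteq> 0" "g dvd smult a Q" using mind[OF Qx] by blast
  have "f dvd smult a Q" using \<open>f dvd g\<close> a(2) by (rule dvd_trans)
  thus ?thesis using a(1) by blast
qed



lemma prime_factor_root:
  fixes h :: "int poly"
  shows "h \<noteq> 0 \<longrightarrow> E x h = 0 \<longrightarrow> (\<exists>f. prime f \<and> f dvd h \<and> E x f = 0)"
proof (induction h rule: prime_divisors_induct)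
  case zero then show ?case by simp
next
  case (unit u)
  then obtain c where "u = [:c:]" "c \<noteq> 0"
    by (metis is_unit_poly_iff zero_neq_one one_dvd mult_zero_left unit_imp_dvd dvd_0_left_iff)
  then show ?case by (simp add: E_def map_poly_pCons)
next
  case (factor p h)
  show ?case
  proof (intro impI)
    assume nz: "p * h \<noteq> 0" and r: "E x (p * h) = 0"
    show "\<exists>f. prime f \<and> f dvd p * h \<and> E x f = 0"
    proof (cases "E x p = 0")
      case True thus ?thesis using factor by auto
    next
      case False
      hence "E x h = 0" using r by (simp add: E_mult)
      then obtain f where "prime f" "f dvd h" "E x f = 0" using factor nz by auto
      thus ?thesis by (auto intro: dvd_mult_left)
    qed
  qed
qed

theorem mainTheorem8:
  fixes N :: nat and b :: "nat \<Rightarrow> nat" and \<rho> :: real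
  assumes "N \<ge> 2"
    and "\<forall>j\<in>{1..N}. b j \<in> {0, 1}"
    and "b N = 1"
    and "(\<Sum>j=1..N. b j * 2 ^ (N - j)) > 1"
    and "charpoly N b \<rho> = 0"
    and "\<forall>x. charpoly N b x = 0 \<longrightarrow> x \<le> \<rho>"
  shows "(2::real) \<notin> Zset \<rho>"
proof
  assume "(2::real) \<in> Zset \<rho>"
  then obtain n z where zs: "2 = (\<Sum>k\<le>n. real (z k) * \<rho> ^ k)" and zd: "\<forall>k\<le>n. z k \<in> {0, 1}"
    unfolding Zset_def by blast
  have r1: "\<rho> > 1" using rho_gt1[OF assms(1-4) assms(6)] .
  define x :: complex where "x = complex_of_real \<rho>"
  define P :: "int poly" where "P = monom 1 N - (\<Sum>j=1..N. monom (int (b j)) (N - j))"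
  define Q :: "int poly" where "Q = (\<Sum>k\<le>n. monom (int (z k)) k) - [:2:]"
  have EP: "E y P = y ^ N - (\<Sum>j=1..N. of_nat (b j) * y ^ (N - j))" for y
    by (simp add: P_def E_def map_poly_of_int_diff map_poly_of_int_sum map_poly_of_int_monom poly_monom poly_sum)
  have EQ: "E y Q = (\<Sum>k\<le>n. of_nat (z k) * y ^ k) - 2" for y
    by (simp add: Q_def E_def map_poly_of_int_diff map_poly_of_int_sum map_poly_of_int_monom poly_monom poly_sum map_poly_pCons)
  have Px: "E x P = 0"
  proof -
    have "E x P = complex_of_real (charpoly N b \<rho>)"
      by (simp add: EP x_def charpoly_def)
    thus ?thesis using assms(5) by simp
  qed
  have Qx: "E x Q = 0"
  proof -
    have "E x Q = complex_of_real ((\<Sum>k\<le>n. real (z k) * \<rho> ^ k) - 2)"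
      by (simp add: EQ x_def)
    thus ?thesis using zs by simp
  qed
  have cP: "coeff P 0 = -1"
  proof -
    have "(\<Sum>j=1..N. coeff (monom (int (b j)) (N - j)) 0) = (\<Sum>j=1..N. if j = N then int (b j) else 0)"
      by (rule sum.cong) (auto simp: coeff_monom)
    also have "\<dots> = 1" using assms(1,3) by simp
    finally show ?thesis using assms(1) by (simp add: P_def coeff_sum coeff_monom)
  qed
  have P0: "P \<noteq> 0" using cP by auto
  obtain f where pf: "prime f" and fP: "f dvd P" and fx: "E x f = 0"
    using prime_factor_root[of P x] P0 Px by blast
  obtain a where a0: "a \<noteq> 0" and fQ: "f dvd smult a Q" using core[OF pf fx Qx] by blast
  have f0: "f \<noteq> 0" using pf by auto
  obtain h where "P = f * h" using fP by (auto elim: dvdE)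
  hence "coeff f 0 * coeff h 0 = -1" using cP by (simp add: coeff_mult_0)
  hence "\<bar>coeff f 0 * coeff h 0\<bar> = 1" by simp
  hence cf: "\<bar>coeff f 0\<bar> = 1" by (rule abs_zmult_eq_1)
  define F :: "complex poly" where "F = map_poly of_int f"
  have degF: "degree F = degree f" unfolding F_def by (rule degree_map_poly) auto
  have F0: "F \<noteq> 0" using f0 unfolding F_def by (simp add: map_poly_eq_0_iff)
  have roots: "\<rho> \<le> norm \<alpha>" if "poly F \<alpha> = 0" for \<alpha>
  proof (rule ccontr)
    assume lt: "\<not> \<rho> \<le> norm \<alpha>"
    have "E \<alpha> f = 0" using that by (simp add: E_def F_def)
    obtain t where "smult a Q = f * t" using fQ by (auto elim: dvdE)
    hence "E \<alpha> (smult a Q) = 0" using \<open>E \<alpha> f = 0\<close> by (simp add: E_mult)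
    hence "E \<alpha> Q = 0" using a0 by (simp add: E_smult)
    hence s2: "(\<Sum>k\<le>n. of_nat (z k) * \<alpha> ^ k) = (2::complex)" by (simp add: EQ)
    have "\<exists>k0\<in>{..n}. k0 \<noteq> 0 \<and> z k0 \<noteq> 0"
    proof (rule ccontr)
      assume nn: "\<not> ?thesis"
      have zz: "z k = 0" if "k \<in> {..n}" "k \<noteq> 0" for k using nn that by blast
      have "(\<Sum>k\<le>n. real (z k) * \<rho> ^ k) = (\<Sum>k\<le>n. if k = 0 then real (z 0) else 0)"
        by (rule sum.cong) (use zz in auto)
      also have "\<dots> = real (z 0)" by simp
      also have "\<dots> \<le> 1" using zd by auto
      finally show False using zs by simp
    qed
    then obtain k0 where k0: "k0 \<le> n" "k0 \<noteq> 0" "z k0 \<noteq> 0" by auto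
    have "2 = norm (\<Sum>k\<le>n. of_nat (z k) * \<alpha> ^ k)" using s2 by simp
    also have "\<dots> \<le> (\<Sum>k\<le>n. real (z k) * norm \<alpha> ^ k)"
      by (rule order_trans[OF norm_sum]) (simp add: norm_mult norm_power)
    also have "\<dots> < (\<Sum>k\<le>n. real (z k) * \<rho> ^ k)"
    proof (rule sum_strict_mono_ex1)
      show "\<forall>k\<in>{..n}. real (z k) * norm \<alpha> ^ k \<le> real (z k) * \<rho> ^ k"
        using lt by (auto intro!: mult_left_mono power_mono)
      have "norm \<alpha> ^ k0 < \<rho> ^ k0" using lt k0 by (intro power_strict_mono) auto
      thus "\<exists>k\<in>{..n}. real (z k) * norm \<alpha> ^ k < real (z k) * \<rho> ^ k"
        using k0 by (intro bexI[of _ k0]) auto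
    qed simp
    finally show False using zs by simp
  qed
  have "norm (coeff F 0) \<ge> norm (lead_coeff F) * \<rho> ^ degree F"
    using root_prod_bound[OF F0 _ roots] r1 by simp
  moreover have "norm (coeff F 0) = 1" using cf unfolding F_def
    by (simp add: coeff_map_poly)
  moreover have "norm (lead_coeff F) \<ge> 1"
  proof -
    have "lead_coeff F = of_int (lead_coeff f)" unfolding F_def using degF
      by (simp add: coeff_map_poly F_def)
    moreover have "lead_coeff f \<noteq> 0" using f0 by simp
    ultimately have e1: "norm (lead_coeff F) = \<bar>real_of_int (lead_coeff f)\<bar>" and nz: "lead_coeff f \<noteq> 0"
      by (metis norm_of_int) (rule \<open>lead_coeff f \<noteq> 0\<close>)
    have "\<bar>lead_coeff f\<bar> \<ge> 1" using nz by arith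
    hence "\<bar>real_of_int (lead_coeff f)\<bar> \<ge> 1" by linarith
    thus ?thesis using e1 by simp
  qed
  moreover have "degree f \<noteq> 0"
  proof
    assume "degree f = 0"
    then obtain c where "f = [:c:]" by (metis degree_eq_zeroE)
    thus False using fx f0 by (simp add: E_def map_poly_pCons)
  qed
  moreover have "\<rho> ^ degree f > 1" using r1 \<open>degree f \<noteq> 0\<close> by (simp add: one_less_power)
  ultimately show False using degF
    by (metis less_le_not_le mult_le_cancel_right1 order_trans zero_less_one less_trans)
qed


end
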